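(* Let $\mathcal{H}$ be an index set of estimation tasks, let $S_{\text{def}}$ be a random "defining" dataset with realization $s$, and for each $h\in\mathcal{H}$ let $\theta_h$ be an unknown real target estimand, $\hat\theta_h=\hat\theta_h(s)$ an estimate computed from $S_{\text{def}}$, and $e_h=e_h(s)\in\mathbb{R}$ an (unknown) error measuring proximity between $\hat\theta_h$ and $\theta_h$. Let $\mathcal{E}(s):=\{(h,\hat\theta_h(s),\theta_h,e_h(s)) : h\in\mathcal{H}\}$. Given $S_{\text{def}}=s$, let $S_{\text{err}}$ be an "error estimation" dataset drawn from a distribution $\mathcal{D}$ (which may depend on $s$). Suppose there are functions $\hat u(S_{\text{err}},h,\lambda)\in\mathbb{R}$ such that for every $h\in\mathcal{H}$ and every $\lambda\in(0,1)$, $$\Pr_{S_{\text{err}}\sim\mathcal{D}}\big(\hat u(S_{\text{err}},h,\lambda)\ge e_h \,\big|\, \mathcal{E}(s)\big)\ge 1-\lambda .$$ Define $\hat\xi(S_{\text{err}},\delta):=\max_{h\in\mathcal{H}}\hat u(S_{\text{err}},h,\delta)$. Then for every $\delta\in(0,1)$, $$\Pr_{S_{\text{err}}\sim\mathcal{D}}\Big(\hat\xi(S_{\text{err}},\delta)\ge \max_{h\in\mathcal{H}} e_h \,\Big|\, \mathcal{E}(s)\Big)\ge 1-\delta \quad\text{and}\quad \Pr_{(S_{\text{def}},S_{\text{err}})}\Big(\hat\xi(S_{\text{err}},\delta)\ge \max_{h\in\mathcal{H}} e_h\Big)\ge 1-\delta .$$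
   Context: Here $\max_{h\in\mathcal{H}}$ denotes a maximum over the class (assumed to be attained, e.g. when $\mathcal{H}$ is finite). Conditioning on $\mathcal{E}(s)$ means conditioning on the realization $S_{\text{def}}=s$, so that all estimates, estimands and errors are fixed with respect to the randomness of $S_{\text{err}}$; $S_{\text{err}}$ is a fresh or held-out dataset not used to construct any $\hat\theta_h$. *)

theory Defs
  imports "HOL-Probability.Probability"
begin

text \<open>Maximum over the task class H (used only where the maximum is assumed attained).\<close>
definition hmax :: "'h set \<Rightarrow> ('h \<Rightarrow> real) \<Rightarrow> real" where
  "hmax H f = (SUP h\<in>H. f h)"

text \<open>Joint law of (S_def, S_err): S_def ~ P, then S_err ~ D s given S_def = s.\<close>
definition joint_law :: "'s measure \<Rightarrow> 'x measure \<Rightarrow> ('s \<Rightarrow> 'x measure) \<Rightarrow> ('s \<times> 'x) measure" where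
  "joint_law P X D = P \<bind> (\<lambda>s. distr (D s) (P \<Otimes>\<^sub>M X) (\<lambda>x. (s, x)))"

end

theory Submission
  imports Defs
begin

theorem theorem2p2:
  fixes P :: "'s measure" and X :: "'x measure" and D :: "'s \<Rightarrow> 'x measure"
    and H :: "'h set" and e :: "'s \<Rightarrow> 'h \<Rightarrow> real"
    and u :: "'s \<Rightarrow> 'x \<Rightarrow> 'h \<Rightarrow> real \<Rightarrow> real" and \<delta> :: real
  assumes P: "prob_space P"
    and D: "D \<in> measurable P (prob_algebra X)"
    and e_attained: "\<forall>s\<in>space P. \<exists>h\<in>H. \<forall>h'\<in>H. e s h' \<le> e s h"
    and u_attained: "\<forall>s\<in>space P. \<forall>x\<in>space X. \<forall>l\<in>{0<..<1}. \<exists>h\<in>H. \<forall>h'\<in>H. u s x h' l \<le> u s x h l"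
    and cover: "\<forall>s\<in>space P. \<forall>h\<in>H. \<forall>l\<in>{0<..<1}.
                 measure (D s) {x\<in>space (D s). u s x h l \<ge> e s h} \<ge> 1 - l"
    and meas: "{p\<in>space (P \<Otimes>\<^sub>M X). hmax H (\<lambda>h. u (fst p) (snd p) h \<delta>) \<ge> hmax H (e (fst p))}
                 \<in> sets (P \<Otimes>\<^sub>M X)"
    and delta: "0 < \<delta>" "\<delta> < 1"
  shows "(\<forall>s\<in>space P. measure (D s) {x\<in>space (D s). hmax H (\<lambda>h. u s x h \<delta>) \<ge> hmax H (e s)} \<ge> 1 - \<delta>)
       \<and> measure (joint_law P X D)
           {p\<in>space (P \<Otimes>\<^sub>M X). hmax H (\<lambda>h. u (fst p) (snd p) h \<delta>) \<ge> hmax H (e (fst p))} \<ge> 1 - \<delta>"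
proof -
  define A where "A = {p\<in>space (P \<Otimes>\<^sub>M X). hmax H (\<lambda>h. u (fst p) (snd p) h \<delta>) \<ge> hmax H (e (fst p))}"
  have Asets: "A \<in> sets (P \<Otimes>\<^sub>M X)" using meas A_def by simp
  have Ds: "prob_space (D s)" "sets (D s) = sets X" "space (D s) = space X" if "s \<in> space P" for s
  proof -
    have "D s \<in> space (prob_algebra X)" using measurable_space[OF D that] .
    then show "prob_space (D s)" "sets (D s) = sets X" "space (D s) = space X"
      by (auto simp: space_prob_algebra dest: sets_eq_imp_space_eq)
  qed
  have sec: "{x\<in>space (D s). hmax H (\<lambda>h. u s x h \<delta>) \<ge> hmax H (e s)} = Pair s -` A"
    and secm: "Pair s -` A \<in> sets (D s)" if s: "s \<in> space P" for s
  proof -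
    show "{x\<in>space (D s). hmax H (\<lambda>h. u s x h \<delta>) \<ge> hmax H (e s)} = Pair s -` A"
      using s Ds(3)[OF s] by (auto simp: A_def space_pair_measure)
    show "Pair s -` A \<in> sets (D s)" using sets_Pair1[OF Asets] Ds(2)[OF s] by simp
  qed
  have part1: "measure (D s) (Pair s -` A) \<ge> 1 - \<delta>" if s: "s \<in> space P" for s
  proof -
    interpret Dp: prob_space "D s" using Ds[OF s] by simp
    obtain h where h: "h \<in> H" "\<forall>h'\<in>H. e s h' \<le> e s h" using e_attained s by blast
    have he: "hmax H (e s) = e s h"
      unfolding hmax_def by (rule cSup_eq_maximum) (use h in auto)
    have sub: "{x\<in>space (D s). u s x h \<delta> \<ge> e s h} \<subseteq> Pair s -` A"
    proof
      fix x assume x: "x \<in> {x\<in>space (D s). u s x h \<delta> \<ge> e s h}"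
      then have xX: "x \<in> space X" using Ds(3)[OF s] by auto
      obtain k where k: "k \<in> H" "\<forall>h'\<in>H. u s x h' \<delta> \<le> u s x k \<delta>"
        using u_attained s xX delta by force
      have "u s x h \<delta> \<le> hmax H (\<lambda>h. u s x h \<delta>)"
        unfolding hmax_def
        by (rule cSUP_upper) (use h k in \<open>auto simp: bdd_above_def\<close>)
      then have "hmax H (\<lambda>h. u s x h \<delta>) \<ge> hmax H (e s)" using x he by auto
      then show "x \<in> Pair s -` A" using sec[OF s] x by blast
    qed
    have "1 - \<delta> \<le> measure (D s) {x\<in>space (D s). u s x h \<delta> \<ge> e s h}"
      using cover s h delta by auto
    also have "\<dots> \<le> measure (D s) (Pair s -` A)"
      by (rule Dp.finite_measure_mono[OF sub secm[OF s]])
    finally show ?thesis .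
  qed
  define N where "N = (\<lambda>s. distr (D s) (P \<Otimes>\<^sub>M X) (\<lambda>x. (s, x)))"
  have Nm: "N \<in> measurable P (subprob_algebra (P \<Otimes>\<^sub>M X))"
    unfolding N_def
    by (rule measurable_distr2[where f="\<lambda>s x. (s, x)"]) (auto intro: measurable_prob_algebraD[OF D])
  interpret PP: prob_space P by (rule P)
  have ne: "space P \<noteq> {}" by (rule PP.not_empty)
  have JL: "joint_law P X D = P \<bind> N" unfolding joint_law_def N_def by simp
  have NA: "emeasure (N s) A \<ge> ennreal (1 - \<delta>)" if s: "s \<in> space P" for s
  proof -
    interpret Dp: prob_space "D s" using Ds[OF s] by simp
    have pm: "(\<lambda>x. (s, x)) \<in> measurable (D s) (P \<Otimes>\<^sub>M X)"
      using measurable_Pair1'[OF s, of X] measurable_cong_sets[OF Ds(2)[OF s] refl] by blast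
    have "emeasure (N s) A = emeasure (D s) ((\<lambda>x. (s, x)) -` A \<inter> space (D s))"
      unfolding N_def by (rule emeasure_distr[OF pm Asets])
    also have "(\<lambda>x. (s, x)) -` A \<inter> space (D s) = Pair s -` A"
      using sets.sets_into_space[OF secm[OF s]] by auto
    also have "emeasure (D s) (Pair s -` A) = ennreal (measure (D s) (Pair s -` A))"
      by (simp add: Dp.emeasure_eq_measure)
    finally show ?thesis using part1[OF s] by (simp add: ennreal_leI)
  qed
  have "emeasure (P \<bind> N) A = (\<integral>\<^sup>+s. emeasure (N s) A \<partial>P)"
    by (rule emeasure_bind[OF ne Nm Asets])
  also have "\<dots> \<ge> (\<integral>\<^sup>+s. ennreal (1 - \<delta>) \<partial>P)"
    by (rule nn_integral_mono) (use NA in auto)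
  finally have ge: "emeasure (P \<bind> N) A \<ge> ennreal (1 - \<delta>)"
    by (simp add: PP.emeasure_space_1)
  have sb: "subprob_space (P \<bind> N)"
    by (rule subprob_space_bind[OF _ Nm]) (simp add: PP.subprob_space_axioms)
  interpret SB: subprob_space "P \<bind> N" by (rule sb)
  have "measure (P \<bind> N) A \<ge> 1 - \<delta>"
    using ge delta by (simp add: SB.emeasure_eq_measure ennreal_le_iff)
  moreover have "\<forall>s\<in>space P. measure (D s) {x\<in>space (D s). hmax H (\<lambda>h. u s x h \<delta>) \<ge> hmax H (e s)} \<ge> 1 - \<delta>"
    using part1 sec by simp
  ultimately show ?thesis using JL A_def by simp
qed

end
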